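(* Let $K$ be a field, $n\ge 1$, and $A_n(\tau_n)$ a quiver of type $A_n$ with arbitrary orientation. Let $$\Theta\colon \bigoplus_{1\le a\le b\le n}\mathbb{I}[a,b]^{m^1_{a,b}}\to \bigoplus_{1\le a\le b\le n}\mathbb{I}[a,b]^{m^2_{a,b}},\qquad \Psi\colon \bigoplus_{1\le a\le b\le n}\mathbb{I}[a,b]^{m^2_{a,b}}\to \bigoplus_{1\le a\le b\le n}\mathbb{I}[a,b]^{m^3_{a,b}}$$ be morphisms of representations of $A_n(\tau_n)$. Then for all $1\le a\le b\le n$, $$[\Psi\Theta]^{a:b}_{a:b}=\Psi^{a:b}_{a:b}\,\Theta^{a:b}_{a:b}.$$
   Context: The interval representation $\mathbb{I}[a,b]$ of $A_n(\tau_n)$ has $K$ at vertices $a,\dots,b$, $0$ elsewhere, identity maps on arrows between two vertices in $[a,b]$, and zero maps otherwise; $\mathbb{I}[a,b]^m$ is the direct sum of $m$ copies. For a morphism $\Phi\colon\bigoplus\mathbb{I}[a,b]^{m_{a,b}}\to\bigoplus\mathbb{I}[a,b]^{m'_{a,b}}$, its block $\Phi^{c:d}_{a:b}\colon\mathbb{I}[a,b]^{m_{a,b}}\to\mathbb{I}[c,d]^{m'_{c,d}}$ is $\pi_{c,d}\circ\Phi\circ\iota_{a,b}$, where $\iota_{a,b}$ is the canonical inclusion of the summand $\mathbb{I}[a,b]^{m_{a,b}}$ into the source and $\pi_{c,d}$ is the canonical projection of the target onto its summand $\mathbb{I}[c,d]^{m'_{c,d}}$. *)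

theory Defs
  imports Main
begin

text \<open>Vertices are 1..n; for 1 <= i < n there is one arrow between i and i+1, pointing
i -> i+1 if tau i and i+1 -> i otherwise.

The direct sum  (+)_{1<=a<=b<=n} I[a,b]^{m a b}  is realised with its canonical basis:
basis vectors of the copy number k (k < m a b) of I[a,b] are indexed by (a,b,k).
At vertex i the vector space is the space of coordinate functions supported on the
basis indices (a,b,k) with a <= i <= b; the structure map along an arrow s -> t is the
identity on coordinates of intervals containing both s and t and zero otherwise.\<close>

type_synonym idx = "nat \<times> nat \<times> nat"

definition coords :: "nat \<Rightarrow> (nat \<Rightarrow> nat \<Rightarrow> nat) \<Rightarrow> nat \<Rightarrow> idx set" where
  "coords n m i = {(a, b, k). 1 \<le> a \<and> a \<le> i \<and> i \<le> b \<and> b \<le> n \<and> k < m a b}"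

definition space :: "nat \<Rightarrow> (nat \<Rightarrow> nat \<Rightarrow> nat) \<Rightarrow> nat \<Rightarrow> (idx \<Rightarrow> 'k::field) set" where
  "space n m i = {v. \<forall>j. j \<notin> coords n m i \<longrightarrow> v j = 0}"

definition smap :: "nat \<Rightarrow> (nat \<Rightarrow> nat \<Rightarrow> nat) \<Rightarrow> nat \<Rightarrow> (idx \<Rightarrow> 'k::field) \<Rightarrow> (idx \<Rightarrow> 'k)" where
  "smap n m t v = (\<lambda>j. if j \<in> coords n m t then v j else 0)"

definition arr_src :: "(nat \<Rightarrow> bool) \<Rightarrow> nat \<Rightarrow> nat" where
  "arr_src \<tau> i = (if \<tau> i then i else i + 1)"

definition arr_tgt :: "(nat \<Rightarrow> bool) \<Rightarrow> nat \<Rightarrow> nat" where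
  "arr_tgt \<tau> i = (if \<tau> i then i + 1 else i)"

definition klinear :: "(idx \<Rightarrow> 'k::field) set \<Rightarrow> (idx \<Rightarrow> 'k) set \<Rightarrow> ((idx \<Rightarrow> 'k) \<Rightarrow> (idx \<Rightarrow> 'k)) \<Rightarrow> bool" where
  "klinear V W f \<longleftrightarrow> (\<forall>v\<in>V. f v \<in> W)
     \<and> (\<forall>u\<in>V. \<forall>v\<in>V. f (\<lambda>j. u j + v j) = (\<lambda>j. f u j + f v j))
     \<and> (\<forall>c. \<forall>v\<in>V. f (\<lambda>j. c * v j) = (\<lambda>j. c * f v j))"

definition is_morphism :: "nat \<Rightarrow> (nat \<Rightarrow> bool) \<Rightarrow> (nat \<Rightarrow> nat \<Rightarrow> nat) \<Rightarrow> (nat \<Rightarrow> nat \<Rightarrow> nat)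
    \<Rightarrow> (nat \<Rightarrow> (idx \<Rightarrow> 'k::field) \<Rightarrow> (idx \<Rightarrow> 'k)) \<Rightarrow> bool" where
  "is_morphism n \<tau> m m' \<Phi> \<longleftrightarrow>
     (\<forall>i\<in>{1..n}. klinear (space n m i) (space n m' i) (\<Phi> i))
   \<and> (\<forall>i\<in>{1..<n}. \<forall>v\<in>space n m (arr_src \<tau> i).
        \<Phi> (arr_tgt \<tau> i) (smap n m (arr_tgt \<tau> i) v) = smap n m' (arr_tgt \<tau> i) (\<Phi> (arr_src \<tau> i) v))"

definition single :: "(nat \<Rightarrow> nat \<Rightarrow> nat) \<Rightarrow> nat \<Rightarrow> nat \<Rightarrow> (nat \<Rightarrow> nat \<Rightarrow> nat)" where
  "single m a b = (\<lambda>c d. if c = a \<and> d = b then m a b else 0)"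

text \<open>Canonical projection onto the coordinates of the summand I[c,d]^{m c d}; on vectors of the
summand I[a,b]^{m a b} the map proj a b is the identity, i.e. the canonical inclusion.\<close>
definition proj :: "nat \<Rightarrow> nat \<Rightarrow> (idx \<Rightarrow> 'k::zero) \<Rightarrow> (idx \<Rightarrow> 'k)" where
  "proj c d v = (\<lambda>(x, y, k). if x = c \<and> y = d then v (x, y, k) else 0)"

text \<open>Block Phi^{c:d}_{a:b} = pi_{c,d} o Phi o iota_{a,b}, vertexwise; it is a morphism from
the representation with multiplicities single m a b to the one with single m' c d.\<close>
definition block :: "(nat \<Rightarrow> (idx \<Rightarrow> 'k::field) \<Rightarrow> (idx \<Rightarrow> 'k)) \<Rightarrow> nat \<Rightarrow> nat \<Rightarrow> nat \<Rightarrow> nat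
    \<Rightarrow> (nat \<Rightarrow> (idx \<Rightarrow> 'k) \<Rightarrow> (idx \<Rightarrow> 'k))" where
  "block \<Phi> a b c d = (\<lambda>i v. proj c d (\<Phi> i (proj a b v)))"

definition comp_mor :: "(nat \<Rightarrow> (idx \<Rightarrow> 'k) \<Rightarrow> (idx \<Rightarrow> 'k)) \<Rightarrow> (nat \<Rightarrow> (idx \<Rightarrow> 'k) \<Rightarrow> (idx \<Rightarrow> 'k))
    \<Rightarrow> (nat \<Rightarrow> (idx \<Rightarrow> 'k) \<Rightarrow> (idx \<Rightarrow> 'k))" where
  "comp_mor \<Psi> \<Theta> = (\<lambda>i. \<Psi> i \<circ> \<Theta> i)"

end

theory Submission
  imports Defs
begin

definition BZ :: "(nat \<Rightarrow> (idx \<Rightarrow> 'k::field) \<Rightarrow> (idx \<Rightarrow> 'k)) \<Rightarrow> nat \<Rightarrow> (nat \<Rightarrow> nat \<Rightarrow> nat)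
   \<Rightarrow> nat \<Rightarrow> nat \<Rightarrow> nat \<Rightarrow> nat \<Rightarrow> nat \<Rightarrow> bool" where
  "BZ \<Phi> n m p q r s j = (\<forall>v\<in>space n (single m p q) j. proj r s (\<Phi> j v) = (\<lambda>_. 0))"

lemma single_sub: "v \<in> space n (single m p q) j \<Longrightarrow> v \<in> space n m j"
  by (auto simp: space_def coords_def single_def split: if_splits)

lemma single_supp: "v \<in> space n (single m p q) j \<Longrightarrow> v (x,y,k) \<noteq> 0 \<Longrightarrow>
   x = p \<and> y = q \<and> k < m p q \<and> 1 \<le> p \<and> p \<le> j \<and> j \<le> q \<and> q \<le> n"
proof -
  assume a: "v \<in> space n (single m p q) j" "v (x,y,k) \<noteq> 0"
  then have "(x,y,k) \<in> coords n (single m p q) j" unfolding space_def by blast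
  then have c: "1 \<le> x \<and> x \<le> j \<and> j \<le> y \<and> y \<le> n \<and> k < single m p q x y" by (simp add: coords_def)
  then have "single m p q x y \<noteq> 0" by linarith
  then have "x = p \<and> y = q" by (simp add: single_def split: if_splits)
  with c show ?thesis by (simp add: single_def)
qed

lemma space_supp: "v \<in> space n m j \<Longrightarrow> v (x,y,k) \<noteq> 0 \<Longrightarrow>
   k < m x y \<and> 1 \<le> x \<and> x \<le> j \<and> j \<le> y \<and> y \<le> n"
  unfolding space_def coords_def by blast

lemma smap_id: "v \<in> space n (single m p q) j \<Longrightarrow> p \<le> t \<Longrightarrow> t \<le> q \<Longrightarrow> smap n m t v = v"
  unfolding smap_def
proof (rule ext)
  fix z assume "v \<in> space n (single m p q) j" "p \<le> t" "t \<le> q"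
  then show "(if z \<in> coords n m t then v z else 0) = v z"
    using single_supp[of v n m p q j] by (cases z) (auto simp: coords_def)
qed

lemma smap_kill: "v \<in> space n (single m p q) j \<Longrightarrow> \<not> (p \<le> t \<and> t \<le> q) \<Longrightarrow> smap n m t v = (\<lambda>_. 0)"
  unfolding smap_def
proof (rule ext)
  fix z assume "v \<in> space n (single m p q) j" "\<not> (p \<le> t \<and> t \<le> q)"
  then show "(if z \<in> coords n m t then v z else 0) = 0"
    using single_supp[of v n m p q j] by (cases z) (auto simp: coords_def)
qed

lemma proj_smap: "x \<in> space n m j \<Longrightarrow> r \<le> t \<Longrightarrow> t \<le> s \<Longrightarrow> proj r s (smap n m t x) = proj r s x"
  unfolding proj_def smap_def
proof (rule ext)
  fix z assume "x \<in> space n m j" "r \<le> t" "t \<le> s"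
  then show "(case z of (xa, y, k) \<Rightarrow> if xa = r \<and> y = s then (if (xa, y, k) \<in> coords n m t then x (xa, y, k) else 0) else 0) =
          (case z of (xa, y, k) \<Rightarrow> if xa = r \<and> y = s then x (xa, y, k) else 0)"
    using space_supp[of x n m j] by (cases z) (auto simp: coords_def)
qed

lemma proj_out: "x \<in> space n m j \<Longrightarrow> \<not> (r \<le> j \<and> j \<le> s) \<Longrightarrow> proj r s x = (\<lambda>_. 0)"
  unfolding proj_def
proof (rule ext)
  fix z assume "x \<in> space n m j" "\<not> (r \<le> j \<and> j \<le> s)"
  then show "(case z of (xa, y, k) \<Rightarrow> if xa = r \<and> y = s then x (xa, y, k) else 0) = 0"
    using space_supp[of x n m j] by (cases z) auto
qed

lemma proj_single: "v \<in> space n (single m p q) j \<Longrightarrow> proj p q v = v"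
  unfolding proj_def
proof (rule ext)
  fix z assume "v \<in> space n (single m p q) j"
  then show "(case z of (xa, y, k) \<Rightarrow> if xa = p \<and> y = q then v (xa, y, k) else 0) = v z"
    using single_supp[of v n m p q j] by (cases z) auto
qed

lemma mor_lin: "is_morphism n \<tau> m m' \<Phi> \<Longrightarrow> 1 \<le> j \<Longrightarrow> j \<le> n \<Longrightarrow> klinear (space n m j) (space n m' j) (\<Phi> j)"
  unfolding is_morphism_def by simp

lemma mor_comm: "is_morphism n \<tau> m m' \<Phi> \<Longrightarrow> 1 \<le> j \<Longrightarrow> j < n \<Longrightarrow> v \<in> space n m (arr_src \<tau> j) \<Longrightarrow>
   \<Phi> (arr_tgt \<tau> j) (smap n m (arr_tgt \<tau> j) v) = smap n m' (arr_tgt \<tau> j) (\<Phi> (arr_src \<tau> j) v)"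
  unfolding is_morphism_def by simp

lemma mor_into: "is_morphism n \<tau> m m' \<Phi> \<Longrightarrow> 1 \<le> j \<Longrightarrow> j \<le> n \<Longrightarrow> v \<in> space n m j \<Longrightarrow> \<Phi> j v \<in> space n m' j"
proof -
  assume a: "is_morphism n \<tau> m m' \<Phi>" "1 \<le> j" "j \<le> n" "v \<in> space n m j"
  have "klinear (space n m j) (space n m' j) (\<Phi> j)" using mor_lin[OF a(1-3)] .
  then have "\<forall>v\<in>space n m j. \<Phi> j v \<in> space n m' j" unfolding klinear_def by (elim conjE)
  then show ?thesis using a(4) by blast
qed

lemma zero_space: "(\<lambda>_. 0) \<in> space n m j" by (simp add: space_def)

lemma mor_zero: "is_morphism n \<tau> m m' \<Phi> \<Longrightarrow> 1 \<le> j \<Longrightarrow> j \<le> n \<Longrightarrow> \<Phi> j (\<lambda>_. 0) = (\<lambda>_. 0)"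
proof -
  assume a: "is_morphism n \<tau> m m' \<Phi>" "1 \<le> j" "j \<le> n"
  have "klinear (space n m j) (space n m' j) (\<Phi> j)" using mor_lin[OF a(1-3)] .
  then have "\<forall>c. \<forall>v\<in>space n m j. \<Phi> j (\<lambda>i. c * v i) = (\<lambda>i. c * \<Phi> j v i)" unfolding klinear_def by (elim conjE)
  then have "\<Phi> j (\<lambda>i. 0 * (\<lambda>_. 0) i) = (\<lambda>i. 0 * \<Phi> j (\<lambda>_. 0) i)"
    using zero_space[of n m j] by (elim allE[of _ 0] ballE[of _ _ "\<lambda>_. 0"]) auto
  then show ?thesis by simp
qed


lemma proj_zero: "proj r s (\<lambda>_. 0) = (\<lambda>_. 0)"
  unfolding proj_def by (rule ext) auto

lemma single_move: "v \<in> space n (single m p q) j \<Longrightarrow> p \<le> j' \<Longrightarrow> j' \<le> q \<Longrightarrow> v \<in> space n (single m p q) j'"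
proof -
  assume a: "v \<in> space n (single m p q) j" "p \<le> j'" "j' \<le> q"
  show ?thesis unfolding space_def
  proof (intro CollectI allI impI)
    fix z assume z: "z \<notin> coords n (single m p q) j'"
    obtain x y k where zz: "z = (x,y,k)" by (cases z)
    show "v z = 0"
    proof (rule ccontr)
      assume "v z \<noteq> 0"
      then have "x = p \<and> y = q \<and> k < m p q \<and> 1 \<le> p \<and> p \<le> j \<and> j \<le> q \<and> q \<le> n"
        using single_supp[OF a(1)] zz by blast
      then have "z \<in> coords n (single m p q) j'" using a zz by (simp add: coords_def single_def)
      with z show False by blast
    qed
  qed
qed

lemma single_zero: "v \<in> space n (single m p q) j \<Longrightarrow> \<not> (p \<le> j \<and> j \<le> q) \<Longrightarrow> v = (\<lambda>_. 0)"
proof (rule ext)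
  fix z assume "v \<in> space n (single m p q) j" "\<not> (p \<le> j \<and> j \<le> q)"
  then show "v z = 0" using single_supp[of v n m p q j] by (cases z) auto
qed

lemma proj_in_single: "x \<in> space n m j \<Longrightarrow> proj c d x \<in> space n (single m c d) j"
proof -
  assume a: "x \<in> space n m j"
  show ?thesis unfolding space_def
  proof (intro CollectI allI impI)
    fix z assume z: "z \<notin> coords n (single m c d) j"
    obtain xx y k where zz: "z = (xx,y,k)" by (cases z)
    show "proj c d x z = 0"
    proof (rule ccontr)
      assume "proj c d x z \<noteq> 0"
      then have "xx = c \<and> y = d \<and> x z \<noteq> 0" using zz by (auto simp: proj_def split: if_splits)
      then have "xx = c \<and> y = d \<and> k < m xx y \<and> 1 \<le> xx \<and> xx \<le> j \<and> j \<le> y \<and> y \<le> n"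
        using space_supp[OF a] zz by blast
      then have "z \<in> coords n (single m c d) j" using zz unfolding coords_def single_def by auto
      with z show False by blast
    qed
  qed
qed

lemma step_eq:
  fixes \<Phi> :: "nat \<Rightarrow> (idx \<Rightarrow> 'k::field) \<Rightarrow> (idx \<Rightarrow> 'k)"
  assumes M: "is_morphism n \<tau> m m' \<Phi>" and j: "1 \<le> j" "j < n"
    and "p \<le> j" "j + 1 \<le> q" and "r \<le> j" "j + 1 \<le> s"
    and v: "v \<in> space n (single m p q) j"
  shows "proj r s (\<Phi> j v) = proj r s (\<Phi> (j+1) v)"
proof (cases "\<tau> j")
  case True
  then have st: "arr_src \<tau> j = j" "arr_tgt \<tau> j = j + 1" by (simp_all add: arr_src_def arr_tgt_def)
  have vs: "v \<in> space n m j" using single_sub[OF v] .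
  have "\<Phi> (j+1) (smap n m (j+1) v) = smap n m' (j+1) (\<Phi> j v)"
    using mor_comm[OF M j, of v] vs unfolding st by blast
  moreover have "smap n m (j+1) v = v" using smap_id[OF v] assms by simp
  moreover have "\<Phi> j v \<in> space n m' j" using mor_into[OF M] j vs by simp
  ultimately show ?thesis using proj_smap[of "\<Phi> j v" n m' j r "j+1" s] assms by simp
next
  case False
  then have st: "arr_src \<tau> j = j + 1" "arr_tgt \<tau> j = j" by (simp_all add: arr_src_def arr_tgt_def)
  have v1: "v \<in> space n (single m p q) (j+1)" using single_move[OF v] assms by simp
  have vs: "v \<in> space n m (j+1)" using single_sub[OF v1] .
  have "\<Phi> j (smap n m j v) = smap n m' j (\<Phi> (j+1) v)"
    using mor_comm[OF M j, of v] vs unfolding st by blast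
  moreover have "smap n m j v = v" using smap_id[OF v] assms by simp
  moreover have "\<Phi> (j+1) v \<in> space n m' (j+1)" using mor_into[OF M] j vs by simp
  ultimately show ?thesis using proj_smap[of "\<Phi> (j+1) v" n m' "j+1" r j s] assms by simp
qed

lemma step_BZ:
  fixes \<Phi> :: "nat \<Rightarrow> (idx \<Rightarrow> 'k::field) \<Rightarrow> (idx \<Rightarrow> 'k)"
  assumes M: "is_morphism n \<tau> m m' \<Phi>" and j: "1 \<le> j" "j < n"
    and "p \<le> j" "j + 1 \<le> q" and "r \<le> j" "j + 1 \<le> s"
  shows "BZ \<Phi> n m p q r s j = BZ \<Phi> n m p q r s (j+1)"
proof -
  have sp: "space n (single m p q) j = (space n (single m p q) (j+1) :: (idx \<Rightarrow> 'k) set)"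
  proof
    show "space n (single m p q) j \<subseteq> (space n (single m p q) (j+1) :: (idx \<Rightarrow> 'k) set)"
    proof
      fix v :: "idx \<Rightarrow> 'k" assume h: "v \<in> space n (single m p q) j"
      have "p \<le> j+1" "j+1 \<le> q" using assms by linarith+
      then show "v \<in> space n (single m p q) (j+1)" using single_move[OF h] by blast
    qed
    show "space n (single m p q) (j+1) \<subseteq> (space n (single m p q) j :: (idx \<Rightarrow> 'k) set)"
    proof
      fix v :: "idx \<Rightarrow> 'k" assume h: "v \<in> space n (single m p q) (j+1)"
      have "p \<le> j" "j \<le> q" using assms by linarith+
      then show "v \<in> space n (single m p q) j" using single_move[OF h] by blast
    qed
  qed
  have e: "\<And>v :: idx \<Rightarrow> 'k. v \<in> space n (single m p q) j \<Longrightarrow> proj r s (\<Phi> j v) = proj r s (\<Phi> (j+1) v)"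
    by (rule step_eq[OF assms])
  show ?thesis unfolding BZ_def sp[symmetric]
  proof (intro iffI ballI)
    fix v :: "idx \<Rightarrow> 'k" assume h: "\<forall>v\<in>space n (single m p q) j. proj r s (\<Phi> j v) = (\<lambda>_. 0)"
      and v: "v \<in> space n (single m p q) j"
    show "proj r s (\<Phi> (j+1) v) = (\<lambda>_. 0)" using h v e[OF v] by (elim ballE) auto
  next
    fix v :: "idx \<Rightarrow> 'k" assume h: "\<forall>v\<in>space n (single m p q) j. proj r s (\<Phi> (j+1) v) = (\<lambda>_. 0)"
      and v: "v \<in> space n (single m p q) j"
    show "proj r s (\<Phi> j v) = (\<lambda>_. 0)" using h v e[OF v] by (elim ballE) auto
  qed
qed

lemma const_BZ:
  fixes \<Phi> :: "nat \<Rightarrow> (idx \<Rightarrow> 'k::field) \<Rightarrow> (idx \<Rightarrow> 'k)"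
  assumes M: "is_morphism n \<tau> m m' \<Phi>"
    and "1 \<le> x" "x \<le> y" "y \<le> n" "p \<le> x" "r \<le> x" "y \<le> q" "y \<le> s"
  shows "BZ \<Phi> n m p q r s x = BZ \<Phi> n m p q r s y"
  using assms(3,4,7,8)
proof (induction y rule: dec_induct)
  case base then show ?case by simp
next
  case (step y)
  have "BZ \<Phi> n m p q r s y = BZ \<Phi> n m p q r s (y+1)"
    by (rule step_BZ[OF M]) (use assms step in auto)
  with step show ?case by simp
qed

lemma L1:
  fixes \<Phi> :: "nat \<Rightarrow> (idx \<Rightarrow> 'k::field) \<Rightarrow> (idx \<Rightarrow> 'k)"
  assumes M: "is_morphism n \<tau> m m' \<Phi>" and "1 \<le> p" "p < r" "r \<le> q" "r \<le> s" "q \<le> n" "\<tau> (r - 1)"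
  shows "BZ \<Phi> n m p q r s r"
  unfolding BZ_def
proof
  fix v :: "idx \<Rightarrow> 'k" assume v: "v \<in> space n (single m p q) r"
  define j where "j = r - 1"
  have rj: "r = j + 1" unfolding j_def using assms by simp
  have j: "1 \<le> j" "j < n" using assms rj by linarith+
  have tj: "\<tau> j" using assms(7) unfolding j_def .
  have st: "arr_src \<tau> j = j" "arr_tgt \<tau> j = j + 1" using tj by (simp_all add: arr_src_def arr_tgt_def)
  have v0: "v \<in> space n (single m p q) j" by (rule single_move[OF v]) (use assms rj in linarith)+
  have vs: "v \<in> space n m j" using single_sub[OF v0] .
  have "\<Phi> (j+1) (smap n m (j+1) v) = smap n m' (j+1) (\<Phi> j v)"
    using mor_comm[OF M j, of v] vs unfolding st by blast
  moreover have "smap n m (j+1) v = v" by (rule smap_id[OF v]) (use assms rj in linarith)+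
  moreover have x: "\<Phi> j v \<in> space n m' j" using mor_into[OF M] j vs by simp
  moreover have "proj r s (smap n m' (j+1) (\<Phi> j v)) = proj r s (\<Phi> j v)"
    by (rule proj_smap[OF x]) (use assms rj in linarith)+
  ultimately have "proj r s (\<Phi> (j+1) v) = proj r s (\<Phi> j v)" by simp
  also have "\<dots> = (\<lambda>_. 0)" by (rule proj_out[OF x]) (use rj in linarith)
  finally show "proj r s (\<Phi> r v) = (\<lambda>_. 0)" using rj by simp
qed

lemma L2:
  fixes \<Phi> :: "nat \<Rightarrow> (idx \<Rightarrow> 'k::field) \<Rightarrow> (idx \<Rightarrow> 'k)"
  assumes M: "is_morphism n \<tau> m m' \<Phi>" and "1 \<le> r" "r < p" "p \<le> s" "p \<le> q" "q \<le> n" "\<not> \<tau> (p - 1)"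
  shows "BZ \<Phi> n m p q r s p"
  unfolding BZ_def
proof
  fix v :: "idx \<Rightarrow> 'k" assume v: "v \<in> space n (single m p q) p"
  define j where "j = p - 1"
  have pj: "p = j + 1" unfolding j_def using assms by simp
  have j: "1 \<le> j" "j < n" using assms pj by linarith+
  have tj: "\<not> \<tau> j" using assms(7) unfolding j_def .
  have st: "arr_src \<tau> j = j + 1" "arr_tgt \<tau> j = j" using tj by (simp_all add: arr_src_def arr_tgt_def)
  have v1: "v \<in> space n (single m p q) (j+1)" using v pj by simp
  have vs: "v \<in> space n m (j+1)" using single_sub[OF v1] .
  have "\<Phi> j (smap n m j v) = smap n m' j (\<Phi> (j+1) v)"
    using mor_comm[OF M j, of v] vs unfolding st by blast
  moreover have "smap n m j v = (\<lambda>_. 0)" by (rule smap_kill[OF v]) (use pj in linarith)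
  moreover have "\<Phi> j (\<lambda>_. 0) = (\<lambda>_. 0)" using mor_zero[OF M] j by simp
  moreover have x: "\<Phi> (j+1) v \<in> space n m' (j+1)" using mor_into[OF M] j vs by simp
  moreover have "proj r s (smap n m' j (\<Phi> (j+1) v)) = proj r s (\<Phi> (j+1) v)"
    by (rule proj_smap[OF x]) (use assms pj in linarith)+
  ultimately have "proj r s (\<Phi> (j+1) v) = proj r s (\<lambda>_. 0)" by simp
  then show "proj r s (\<Phi> p v) = (\<lambda>_. 0)" using pj by (simp add: proj_zero)
qed

lemma R1:
  fixes \<Phi> :: "nat \<Rightarrow> (idx \<Rightarrow> 'k::field) \<Rightarrow> (idx \<Rightarrow> 'k)"
  assumes M: "is_morphism n \<tau> m m' \<Phi>" and "1 \<le> p" "p \<le> q" "r \<le> q" "q < s" "s \<le> n" "\<tau> q"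
  shows "BZ \<Phi> n m p q r s q"
  unfolding BZ_def
proof
  fix v :: "idx \<Rightarrow> 'k" assume v: "v \<in> space n (single m p q) q"
  have j: "1 \<le> q" "q < n" using assms by linarith+
  have st: "arr_src \<tau> q = q" "arr_tgt \<tau> q = q + 1" using assms(7) by (simp_all add: arr_src_def arr_tgt_def)
  have vs: "v \<in> space n m q" using single_sub[OF v] .
  have "\<Phi> (q+1) (smap n m (q+1) v) = smap n m' (q+1) (\<Phi> q v)"
    using mor_comm[OF M j, of v] vs unfolding st by blast
  moreover have "smap n m (q+1) v = (\<lambda>_. 0)" by (rule smap_kill[OF v]) linarith
  moreover have "\<Phi> (q+1) (\<lambda>_. 0) = (\<lambda>_. 0)" using mor_zero[OF M] j by simp
  moreover have x: "\<Phi> q v \<in> space n m' q" using mor_into[OF M] j vs by simp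
  moreover have "proj r s (smap n m' (q+1) (\<Phi> q v)) = proj r s (\<Phi> q v)"
    by (rule proj_smap[OF x]) (use assms in linarith)+
  ultimately have "proj r s (\<Phi> q v) = proj r s (\<lambda>_. 0)" by simp
  then show "proj r s (\<Phi> q v) = (\<lambda>_. 0)" by (simp add: proj_zero)
qed

lemma R2:
  fixes \<Phi> :: "nat \<Rightarrow> (idx \<Rightarrow> 'k::field) \<Rightarrow> (idx \<Rightarrow> 'k)"
  assumes M: "is_morphism n \<tau> m m' \<Phi>" and "1 \<le> r" "p \<le> s" "r \<le> s" "s < q" "q \<le> n" "\<not> \<tau> s"
  shows "BZ \<Phi> n m p q r s s"
  unfolding BZ_def
proof
  fix v :: "idx \<Rightarrow> 'k" assume v: "v \<in> space n (single m p q) s"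
  have j: "1 \<le> s" "s < n" using assms by linarith+
  have st: "arr_src \<tau> s = s + 1" "arr_tgt \<tau> s = s" using assms(7) by (simp_all add: arr_src_def arr_tgt_def)
  have v1: "v \<in> space n (single m p q) (s+1)" by (rule single_move[OF v]) (use assms in linarith)+
  have vs: "v \<in> space n m (s+1)" using single_sub[OF v1] .
  have "\<Phi> s (smap n m s v) = smap n m' s (\<Phi> (s+1) v)"
    using mor_comm[OF M j, of v] vs unfolding st by blast
  moreover have "smap n m s v = v" by (rule smap_id[OF v]) (use assms in linarith)+
  moreover have x: "\<Phi> (s+1) v \<in> space n m' (s+1)" using mor_into[OF M] j vs by simp
  moreover have "proj r s (smap n m' s (\<Phi> (s+1) v)) = proj r s (\<Phi> (s+1) v)"
    by (rule proj_smap[OF x]) (use assms in linarith)+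
  ultimately have "proj r s (\<Phi> s v) = proj r s (\<Phi> (s+1) v)" by simp
  also have "\<dots> = (\<lambda>_. 0)" by (rule proj_out[OF x]) linarith
  finally show "proj r s (\<Phi> s v) = (\<lambda>_. 0)" .
qed

lemma either:
  fixes \<Theta> \<Psi> :: "nat \<Rightarrow> (idx \<Rightarrow> 'k::field) \<Rightarrow> (idx \<Rightarrow> 'k)"
  assumes T: "is_morphism n \<tau> m1 m2 \<Theta>" and P: "is_morphism n \<tau> m2 m3 \<Psi>"
    and "1 \<le> a" "a \<le> i" "i \<le> b" "b \<le> n" "1 \<le> c" "c \<le> i" "i \<le> d" "d \<le> n"
    and ne: "(c, d) \<noteq> (a, b)"
  shows "BZ \<Theta> n m1 a b c d i \<or> BZ \<Psi> n m2 c d a b i"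
proof -
  have tT: "BZ \<Theta> n m1 a b c d x \<Longrightarrow> max a c \<le> x \<Longrightarrow> x \<le> min b d \<Longrightarrow> BZ \<Theta> n m1 a b c d i" for x
  proof -
    assume h: "BZ \<Theta> n m1 a b c d x" "max a c \<le> x" "x \<le> min b d"
    show ?thesis
    proof (cases "x \<le> i")
      case True then show ?thesis using const_BZ[OF T, of x i a c b d] h assms by simp
    next
      case False then show ?thesis using const_BZ[OF T, of i x a c b d] h assms by simp
    qed
  qed
  have tP: "BZ \<Psi> n m2 c d a b x \<Longrightarrow> max a c \<le> x \<Longrightarrow> x \<le> min b d \<Longrightarrow> BZ \<Psi> n m2 c d a b i" for x
  proof -
    assume h: "BZ \<Psi> n m2 c d a b x" "max a c \<le> x" "x \<le> min b d"
    show ?thesis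
    proof (cases "x \<le> i")
      case True then show ?thesis using const_BZ[OF P, of x i c a d b] h assms by simp
    next
      case False then show ?thesis using const_BZ[OF P, of i x c a d b] h assms by simp
    qed
  qed
  consider "a < c" | "c < a" | "a = c" "d < b" | "a = c" "b < d" using ne by fastforce
  then show ?thesis
  proof cases
    case 1
    show ?thesis
    proof (cases "\<tau> (c - 1)")
      case True
      have "BZ \<Theta> n m1 a b c d c" by (rule L1[OF T]) (use assms 1 True in auto)
      then show ?thesis using tT[of c] 1 assms by simp
    next
      case False
      have "BZ \<Psi> n m2 c d a b c" by (rule L2[OF P]) (use assms 1 False in auto)
      then show ?thesis using tP[of c] 1 assms by simp
    qed
  next
    case 2
    show ?thesis
    proof (cases "\<tau> (a - 1)")
      case True
      have "BZ \<Psi> n m2 c d a b a" by (rule L1[OF P]) (use assms 2 True in auto)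
      then show ?thesis using tP[of a] 2 assms by simp
    next
      case False
      have "BZ \<Theta> n m1 a b c d a" by (rule L2[OF T]) (use assms 2 False in auto)
      then show ?thesis using tT[of a] 2 assms by simp
    qed
  next
    case 3
    show ?thesis
    proof (cases "\<tau> d")
      case True
      have "BZ \<Psi> n m2 c d a b d" by (rule R1[OF P]) (use assms 3 True in auto)
      then show ?thesis using tP[of d] 3 assms by simp
    next
      case False
      have "BZ \<Theta> n m1 a b c d d" by (rule R2[OF T]) (use assms 3 False in auto)
      then show ?thesis using tT[of d] 3 assms by simp
    qed
  next
    case 4
    show ?thesis
    proof (cases "\<tau> b")
      case True
      have "BZ \<Theta> n m1 a b c d b" by (rule R1[OF T]) (use assms 4 True in auto)
      then show ?thesis using tT[of b] 4 assms by simp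
    next
      case False
      have "BZ \<Psi> n m2 c d a b b" by (rule R2[OF P]) (use assms 4 False in auto)
      then show ?thesis using tP[of b] 4 assms by simp
    qed
  qed
qed


lemma space_add: "u \<in> space n m j \<Longrightarrow> v \<in> space n m j \<Longrightarrow> (\<lambda>z. u z + v z) \<in> space n m j"
  unfolding space_def by auto

lemma space_sum: "finite P \<Longrightarrow> (\<And>p. p \<in> P \<Longrightarrow> f p \<in> space n m j) \<Longrightarrow> (\<lambda>z. \<Sum>p\<in>P. f p z) \<in> space n m j"
proof (induction P rule: finite_induct)
  case empty then show ?case by (simp add: zero_space)
next
  case (insert x F)
  then show ?case using space_add[of "f x" n m j "\<lambda>z. \<Sum>p\<in>F. f p z"] by simp
qed

lemma mor_sum:
  fixes \<Phi> :: "nat \<Rightarrow> (idx \<Rightarrow> 'k::field) \<Rightarrow> (idx \<Rightarrow> 'k)"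
  assumes M: "is_morphism n \<tau> m m' \<Phi>" and j: "1 \<le> j" "j \<le> n"
  shows "finite P \<Longrightarrow> (\<And>p. p \<in> P \<Longrightarrow> f p \<in> space n m j) \<Longrightarrow>
     \<Phi> j (\<lambda>z. \<Sum>p\<in>P. f p z) = (\<lambda>z. \<Sum>p\<in>P. \<Phi> j (f p) z)"
proof (induction P rule: finite_induct)
  case empty then show ?case using mor_zero[OF M j] by simp
next
  case (insert x F)
  have add: "\<forall>u\<in>space n m j. \<forall>v\<in>space n m j. \<Phi> j (\<lambda>z. u z + v z) = (\<lambda>z. \<Phi> j u z + \<Phi> j v z)"
    using mor_lin[OF M j] unfolding klinear_def by (elim conjE)
  have fx: "f x \<in> space n m j" using insert by simp
  have fs: "(\<lambda>z. \<Sum>p\<in>F. f p z) \<in> space n m j" using space_sum[of F f n m j] insert by simp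
  have "\<Phi> j (\<lambda>z. \<Sum>p\<in>insert x F. f p z) = \<Phi> j (\<lambda>z. f x z + (\<lambda>z. \<Sum>p\<in>F. f p z) z)"
    using insert by simp
  also have "\<dots> = (\<lambda>z. \<Phi> j (f x) z + \<Phi> j (\<lambda>z. \<Sum>p\<in>F. f p z) z)"
    using bspec[OF bspec[OF add fx] fs] by simp
  also have "\<dots> = (\<lambda>z. \<Sum>p\<in>insert x F. \<Phi> j (f p) z)" using insert by simp
  finally show ?case .
qed

lemma proj_sum: "proj a b (\<lambda>z. \<Sum>p\<in>P. g p z) = (\<lambda>z. \<Sum>p\<in>P. proj a b (g p) z)"
proof (rule ext)
  fix z :: idx
  obtain x y k where zz: "z = (x,y,k)" by (cases z)
  show "proj a b (\<lambda>z. \<Sum>p\<in>P. g p z) z = (\<Sum>p\<in>P. proj a b (g p) z)"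
    unfolding zz proj_def by (cases "x = a \<and> y = b") auto
qed

lemma proj_proj: "proj a b (proj a b w) = proj a b w"
  unfolding proj_def by (rule ext) auto

lemma decomp:
  assumes w: "w \<in> space n m j"
  shows "w = (\<lambda>z. \<Sum>p\<in>{1..n}\<times>{1..n}. proj (fst p) (snd p) w z)"
proof (rule ext)
  fix z :: idx
  obtain x y k where zz: "z = (x,y,k)" by (cases z)
  have e: "proj (fst p) (snd p) w z = (if p = (x,y) then w z else 0)" for p
    unfolding zz proj_def by (cases p) auto
  show "w z = (\<Sum>p\<in>{1..n}\<times>{1..n}. proj (fst p) (snd p) w z)"
  proof (cases "w z = 0")
    case True then show ?thesis unfolding e by simp
  next
    case False
    then have "(x,y) \<in> {1..n}\<times>{1..n}" using space_supp[OF w, of x y k] zz by auto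
    then show ?thesis unfolding e by simp
  qed
qed

theorem mainTheorem6:
  fixes n :: nat and \<tau> :: "nat \<Rightarrow> bool"
    and m1 m2 m3 :: "nat \<Rightarrow> nat \<Rightarrow> nat"
    and \<Theta> \<Psi> :: "nat \<Rightarrow> (idx \<Rightarrow> 'k::field) \<Rightarrow> (idx \<Rightarrow> 'k)"
  assumes "n \<ge> 1"
    and "is_morphism n \<tau> m1 m2 \<Theta>"
    and "is_morphism n \<tau> m2 m3 \<Psi>"
    and "1 \<le> a" and "a \<le> b" and "b \<le> n"
  shows "\<forall>i\<in>{1..n}. \<forall>v\<in>space n (single m1 a b) i.
           block (comp_mor \<Psi> \<Theta>) a b a b i v = block \<Psi> a b a b i (block \<Theta> a b a b i v)"
proof (intro ballI)
  fix i and v :: "idx \<Rightarrow> 'k" assume i: "i \<in> {1..n}" and v: "v \<in> space n (single m1 a b) i"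
  have i1: "1 \<le> i" "i \<le> n" using i by auto
  note T = assms(2) and P = assms(3)
  define w where "w = \<Theta> i v"
  have pv: "proj a b v = v" using proj_single[OF v] .
  have ws: "w \<in> space n m2 i" unfolding w_def using mor_into[OF T i1 single_sub[OF v]] .
  define Q where "Q = {1..n}\<times>{1..n}"
  define f where "f p = proj (fst p) (snd p) w" for p
  have fs: "f p \<in> space n m2 i" for p
    unfolding f_def using single_sub[OF proj_in_single[OF ws]] .
  have "\<Psi> i w = \<Psi> i (\<lambda>z. \<Sum>p\<in>Q. f p z)" using decomp[OF ws] unfolding Q_def f_def by metis
  also have "\<dots> = (\<lambda>z. \<Sum>p\<in>Q. \<Psi> i (f p) z)" using mor_sum[OF P i1, of Q f] fs unfolding Q_def by simp
  finally have "proj a b (\<Psi> i w) = (\<lambda>z. \<Sum>p\<in>Q. proj a b (\<Psi> i (f p)) z)" by (simp add: proj_sum)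
  also have "\<dots> = (\<lambda>z. proj a b (\<Psi> i (f (a,b))) z)"
  proof (rule ext)
    fix z
    have ab: "(a,b) \<in> Q" using assms unfolding Q_def by auto
    have zero: "proj a b (\<Psi> i (f p)) = (\<lambda>_. 0)" if p: "p \<in> Q - {(a,b)}" for p
    proof -
      obtain c d where cd: "p = (c,d)" by (cases p)
      have cdr: "1 \<le> c" "d \<le> n" "(c,d) \<noteq> (a,b)" using p cd unfolding Q_def by auto
      have fz: "f p = proj c d w" unfolding f_def cd by simp
      have z0: "proj a b (\<Psi> i (\<lambda>_. 0)) = (\<lambda>_. 0)" using mor_zero[OF P i1] proj_zero by simp
      show ?thesis
      proof (cases "a \<le> i \<and> i \<le> b \<and> c \<le> i \<and> i \<le> d")
        case False
        then have "proj c d w = (\<lambda>_. 0)"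
        proof (cases "a \<le> i \<and> i \<le> b")
          case True
          with False show ?thesis using proj_out[OF ws] by blast
        next
          case False
          then have "v = (\<lambda>_. 0)" using single_zero[OF v] by blast
          then have "w = (\<lambda>_. 0)" unfolding w_def using mor_zero[OF T i1] by simp
          then show ?thesis using proj_zero by simp
        qed
        then show ?thesis using fz z0 by simp
      next
        case True
        have "BZ \<Theta> n m1 a b c d i \<or> BZ \<Psi> n m2 c d a b i"
          by (rule either[OF T P]) (use True cdr assms in auto)
        then show ?thesis
        proof
          assume "BZ \<Theta> n m1 a b c d i"
          then have "proj c d w = (\<lambda>_. 0)" unfolding BZ_def w_def using v by blast
          then show ?thesis using fz z0 by simp
        next
          assume "BZ \<Psi> n m2 c d a b i"
          then show ?thesis unfolding BZ_def fz using proj_in_single[OF ws, of c d] by blast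
        qed
      qed
    qed
    have "(\<Sum>p\<in>Q. proj a b (\<Psi> i (f p)) z) = proj a b (\<Psi> i (f (a,b))) z + (\<Sum>p\<in>Q - {(a,b)}. proj a b (\<Psi> i (f p)) z)"
      using ab by (intro sum.remove) (simp_all add: Q_def)
    also have "(\<Sum>p\<in>Q - {(a,b)}. proj a b (\<Psi> i (f p)) z) = 0"
      using zero by (intro sum.neutral) simp
    finally show "(\<Sum>p\<in>Q. proj a b (\<Psi> i (f p)) z) = proj a b (\<Psi> i (f (a,b))) z" by simp
  qed
  finally have key: "proj a b (\<Psi> i w) = proj a b (\<Psi> i (proj a b w))" unfolding f_def by simp
  show "block (comp_mor \<Psi> \<Theta>) a b a b i v = block \<Psi> a b a b i (block \<Theta> a b a b i v)"
    unfolding block_def comp_mor_def pv proj_proj using key unfolding w_def by simp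
qed

end
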